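(* Let $(X,d_X)$ and $(Y,d_Y)$ be compact metric spaces and let $f:X\to Y$ be Rakotch contracting. Then the induced map $Pf:(PX,d_{PX})\to(PY,d_{PY})$ is Rakotch contracting.
   Context: For a compact metric space $(X,d_X)$, $PX$ denotes the space of Borel probability measures on $X$ with the metric $d_{PX}(\mu,\eta)=\inf\{\int_{X\times X}d_X(x,y)\,d\lambda:\lambda\in\mathcal B(\mu,\eta)\}$, where $\mathcal B(\mu,\eta)$ is the set of Borel probability measures $\lambda$ on $X\times X$ whose images under the first and second coordinate projections are $\mu$ and $\eta$ respectively. For continuous $f:X\to Y$, $Pf:PX\to PY$ is given by $Pf(\mu)(B)=\mu(f^{-1}(B))$ for Borel $B\subset Y$. A map $g:(X,d_X)\to(Y,d_Y)$ is Rakotch contracting if there is $\varphi:[0,\infty)\to[0,\infty)$ with $d_Y(g(x),g(x'))\le\varphi(d_X(x,x'))$ for all $x,x'$ and $\sup_{a<t<\infty}\varphi(t)/t<1$ for every $a>0$. *)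

theory Defs
  imports "HOL-Probability.Probability"
begin

text \<open>Rakotch contracting map g from (A,dA) to (B,dB).  The condition
  sup_{a<t} phi t / t < 1 is written as: there is c < 1 bounding phi t / t for all t > a.\<close>
definition rakotch_contracting ::
  "'a set \<Rightarrow> ('a \<Rightarrow> 'a \<Rightarrow> real) \<Rightarrow> 'b set \<Rightarrow> ('b \<Rightarrow> 'b \<Rightarrow> real) \<Rightarrow> ('a \<Rightarrow> 'b) \<Rightarrow> bool" where
  "rakotch_contracting A dA B dB g \<longleftrightarrow> g ` A \<subseteq> B \<and>
     (\<exists>\<phi>::real \<Rightarrow> real. (\<forall>t\<ge>0. \<phi> t \<ge> 0) \<and>
        (\<forall>x\<in>A. \<forall>x'\<in>A. dB (g x) (g x') \<le> \<phi> (dA x x')) \<and>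
        (\<forall>a>0. \<exists>c<1. \<forall>t>a. \<phi> t / t \<le> c))"

definition PM :: "'a::metric_space set \<Rightarrow> 'a measure set" where
  "PM X = {\<mu>. prob_space \<mu> \<and> sets \<mu> = sets (restrict_space borel X)}"

definition couplings :: "'a::metric_space set \<Rightarrow> 'a measure \<Rightarrow> 'a measure \<Rightarrow> ('a \<times> 'a) measure set" where
  "couplings X \<mu> \<eta> = {l. prob_space l \<and> sets l = sets (restrict_space borel (X \<times> X)) \<and>
      distr l (restrict_space borel X) fst = \<mu> \<and> distr l (restrict_space borel X) snd = \<eta>}"

definition dP :: "'a::metric_space set \<Rightarrow> 'a measure \<Rightarrow> 'a measure \<Rightarrow> real" where
  "dP X \<mu> \<eta> = Inf ((\<lambda>l. integral\<^sup>L l (\<lambda>p. dist (fst p) (snd p))) ` couplings X \<mu> \<eta>)"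

definition Pmap :: "'b::metric_space set \<Rightarrow> ('a \<Rightarrow> 'b) \<Rightarrow> 'a measure \<Rightarrow> 'b measure" where
  "Pmap Y f \<mu> = distr \<mu> (restrict_space borel Y) f"

end

theory Submission
  imports Defs
begin

lemma sets_prod_restrict:
  fixes X :: "'a::metric_space set"
  assumes "compact X"
  shows "sets (restrict_space borel X \<Otimes>\<^sub>M restrict_space borel X) = sets (restrict_space borel (X \<times> X))"
proof -
  let ?P = "restrict_space borel X \<Otimes>\<^sub>M restrict_space borel X"
  let ?Q = "restrict_space borel (X \<times> X)"
  have spP: "space ?P = X \<times> X" by (simp add: space_pair_measure space_restrict_space)
  have spQ: "space ?Q = X \<times> X" by (simp add: space_restrict_space)
  have fstm: "fst \<in> measurable ?Q (restrict_space borel X)"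
    by (rule measurable_restrict_space2) (auto simp: space_restrict_space intro!: borel_measurable_continuous_on_restrict continuous_intros)
  have sndm: "snd \<in> measurable ?Q (restrict_space borel X)"
    by (rule measurable_restrict_space2) (auto simp: space_restrict_space intro!: borel_measurable_continuous_on_restrict continuous_intros)
  have m1: "(\<lambda>x. x) \<in> measurable ?Q ?P"
    using measurable_Pair[OF fstm sndm] by simp
  have tb: "\<forall>e>0. \<exists>k. finite k \<and> k \<subseteq> X \<and> X \<subseteq> (\<Union>x\<in>k. ball x e)"
    using assms by (intro seq_compact_imp_totally_bounded compact_imp_seq_compact)
  have "\<forall>n::nat. \<exists>k. finite k \<and> k \<subseteq> X \<and> X \<subseteq> (\<Union>x\<in>k. ball x (1 / (Suc n)))"
    using tb by simp
  then obtain K where K: "\<And>n::nat. finite (K n) \<and> K n \<subseteq> X \<and> X \<subseteq> (\<Union>x\<in>K n. ball x (1 / (Suc n)))"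
    using choice[of "\<lambda>n k. finite k \<and> k \<subseteq> X \<and> X \<subseteq> (\<Union>x\<in>k. ball x (1 / (Suc n)))"] by blast
  have m2: "(\<lambda>x. x) \<in> measurable ?P ?Q"
  proof (rule measurable_restrict_space2)
    show "(\<lambda>x. x) \<in> space ?P \<rightarrow> X \<times> X" using spP by auto
    show "(\<lambda>x. x) \<in> borel_measurable ?P"
    proof (rule borel_measurableI)
      fix S :: "('a \<times> 'a) set" assume S: "open S"
      define I where "I = (SIGMA n:UNIV. {p \<in> K n \<times> K n. ball (fst p) (1 / Suc n) \<times> ball (snd p) (1 / Suc n) \<subseteq> S})"
      define R where "R = (\<lambda>q::nat \<times> 'a \<times> 'a. (X \<inter> ball (fst (snd q)) (1 / Suc (fst q))) \<times> (X \<inter> ball (snd (snd q)) (1 / Suc (fst q))))"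
      have "countable {p \<in> K n \<times> K n. ball (fst p) (1 / Suc n) \<times> ball (snd p) (1 / Suc n) \<subseteq> S}" for n
        by (rule countable_finite) (use K[of n] in auto)
      then have cI: "countable I" unfolding I_def
        by (intro countable_SIGMA) auto
      have eq: "S \<inter> (X \<times> X) = (\<Union>(R ` I))"
      proof
        show "\<Union>(R ` I) \<subseteq> S \<inter> (X \<times> X)" unfolding R_def I_def by auto
        show "S \<inter> (X \<times> X) \<subseteq> \<Union>(R ` I)"
        proof
          fix z assume z: "z \<in> S \<inter> (X \<times> X)"
          obtain x y where zxy: "z = (x, y)" by (cases z)
          obtain e where e: "e > 0" "ball z e \<subseteq> S" using S z open_contains_ball by blast
          obtain n :: nat where n: "1 / Suc n < e / 4"
            using e by (metis divide_pos_pos zero_less_numeral nat_approx_posE)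
          have x: "x \<in> X" and y: "y \<in> X" using z zxy by auto
          obtain d1 where d1: "d1 \<in> K n" "x \<in> ball d1 (1 / Suc n)" using K[of n] x by blast
          obtain d2 where d2: "d2 \<in> K n" "y \<in> ball d2 (1 / Suc n)" using K[of n] y by blast
          have sub: "ball d1 (1 / Suc n) \<times> ball d2 (1 / Suc n) \<subseteq> S"
          proof
            fix w assume w: "w \<in> ball d1 (1 / Suc n) \<times> ball d2 (1 / Suc n)"
            obtain a b where wab: "w = (a, b)" by (cases w)
            have "dist x a < 2 / Suc n" using w wab d1 dist_triangle[of x a d1] by (auto simp: dist_commute)
            moreover have "dist y b < 2 / Suc n" using w wab d2 dist_triangle[of y b d2] by (auto simp: dist_commute)
            moreover have "dist z w \<le> dist x a + dist y b"
              using zxy wab dist_Pair_Pair[of x y a b] sqrt_add_le_add_sqrt[of "(dist x a)\<^sup>2" "(dist y b)\<^sup>2"]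
              by simp
            ultimately have "dist z w < e" using n by simp
            then show "w \<in> S" using e by (auto simp: dist_commute)
          qed
          have "(n, d1, d2) \<in> I" unfolding I_def using d1 d2 sub by auto
          moreover have "z \<in> R (n, d1, d2)" unfolding R_def using zxy x y d1 d2 by auto
          ultimately show "z \<in> \<Union>(R ` I)" by blast
        qed
      qed
      have "R q \<in> sets ?P" for q unfolding R_def
        by (intro pair_measureI) (auto simp: sets_restrict_space)
      then have "\<Union>(R ` I) \<in> sets ?P" using cI by (intro sets.countable_UN') auto
      then show "(\<lambda>x. x) -` S \<inter> space ?P \<in> sets ?P" using eq spP by simp
    qed
  qed
  show ?thesis
  proof
    show "sets ?P \<subseteq> sets ?Q"
    proof
      fix A assume "A \<in> sets ?P"
      from measurable_sets[OF m1 this] sets.sets_into_space[OF this] show "A \<in> sets ?Q"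
        using spP spQ by (simp add: Int_absorb2)
    qed
    show "sets ?Q \<subseteq> sets ?P"
    proof
      fix A assume "A \<in> sets ?Q"
      from measurable_sets[OF m2 this] sets.sets_into_space[OF this] show "A \<in> sets ?P"
        using spP spQ by (simp add: Int_absorb2)
    qed
  qed
qed


lemma meas_cont:
  assumes "sets M = sets (restrict_space borel A)" "continuous_on A h" "h ` A \<subseteq> B"
  shows "h \<in> measurable M (restrict_space borel B)"
proof -
  have "h \<in> measurable (restrict_space borel A) (restrict_space borel B)"
    by (rule measurable_restrict_space2) (use assms in \<open>auto simp: space_restrict_space intro!: borel_measurable_continuous_on_restrict\<close>)
  then show ?thesis by (simp add: measurable_cong_sets[OF assms(1) refl])
qed

lemma meas_cont_borel:
  assumes "sets M = sets (restrict_space borel A)" "continuous_on A h"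
  shows "h \<in> borel_measurable M"
  using borel_measurable_continuous_on_restrict[OF assms(2)] by (simp add: measurable_cong_sets[OF assms(1) refl])

lemma integrable_cont_bdd:
  fixes h :: "'a::metric_space \<Rightarrow> real"
  assumes "prob_space l" "sets l = sets (restrict_space borel A)" "continuous_on A h"
    "\<forall>p\<in>A. \<bar>h p\<bar> \<le> B"
  shows "integrable l h"
proof -
  interpret prob_space l by fact
  have sp: "space l = A" using sets_eq_imp_space_eq[OF assms(2)] by (simp add: space_restrict_space)
  show ?thesis
    by (rule integrable_const_bound[where B=B]) (use assms sp meas_cont_borel in auto)
qed

lemma compact_dist_bound:
  fixes X :: "'a::metric_space set"
  assumes "compact X"
  obtains B where "\<forall>x\<in>X. \<forall>y\<in>X. dist x y \<le> B"
  using compact_imp_bounded[OF assms] bounded_two_points by metis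

lemma coupling_exists:
  fixes X :: "'a::metric_space set"
  assumes "compact X" "\<mu> \<in> PM X" "\<eta> \<in> PM X"
  shows "\<mu> \<Otimes>\<^sub>M \<eta> \<in> couplings X \<mu> \<eta>"
proof -
  have pm: "prob_space \<mu>" "sets \<mu> = sets (restrict_space borel X)"
     "prob_space \<eta>" "sets \<eta> = sets (restrict_space borel X)" using assms by (auto simp: PM_def)
  have ss: "sets (\<mu> \<Otimes>\<^sub>M \<eta>) = sets (restrict_space borel (X \<times> X))"
    using sets_prod_restrict[OF assms(1)] sets_pair_measure_cong[OF pm(2) pm(4)] by simp
  interpret pmu: prob_space \<mu> by fact
  interpret peta: prob_space \<eta> by fact
  interpret pair_prob_space \<mu> \<eta> ..
  have "distr (\<mu> \<Otimes>\<^sub>M \<eta>) (restrict_space borel X) fst = distr (\<mu> \<Otimes>\<^sub>M \<eta>) \<mu> fst"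
    by (rule distr_cong) (use pm in auto)
  also have "\<dots> = \<mu>" by (rule peta.distr_pair_fst)
  finally have 1: "distr (\<mu> \<Otimes>\<^sub>M \<eta>) (restrict_space borel X) fst = \<mu>" .
  have "distr (\<mu> \<Otimes>\<^sub>M \<eta>) (restrict_space borel X) snd = distr (\<mu> \<Otimes>\<^sub>M \<eta>) \<eta> snd"
    by (rule distr_cong) (use pm in auto)
  also have "\<dots> = \<eta>"
  proof (intro measure_eqI)
    fix A assume A: "A \<in> sets (distr (\<mu> \<Otimes>\<^sub>M \<eta>) \<eta> snd)"
    from A have "emeasure (distr (\<mu> \<Otimes>\<^sub>M \<eta>) \<eta> snd) A = emeasure (\<mu> \<Otimes>\<^sub>M \<eta>) (space \<mu> \<times> A)"
      by (auto simp add: emeasure_distr space_pair_measure dest: sets.sets_into_space intro!: arg_cong2[where f=emeasure])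
    with A show "emeasure (distr (\<mu> \<Otimes>\<^sub>M \<eta>) \<eta> snd) A = emeasure \<eta> A"
      by (simp add: peta.emeasure_pair_measure_Times[OF sets.top] pmu.emeasure_space_1)
  qed simp
  finally have 2: "distr (\<mu> \<Otimes>\<^sub>M \<eta>) (restrict_space borel X) snd = \<eta>" .
  show ?thesis unfolding couplings_def using 1 2 ss prob_space_pair[OF pm(1) pm(3)] by auto
qed

lemma dP_nonneg:
  fixes X :: "'a::metric_space set"
  assumes "compact X" "\<mu> \<in> PM X" "\<eta> \<in> PM X"
  shows "0 \<le> dP X \<mu> \<eta>"
  unfolding dP_def using coupling_exists[OF assms]
  by (intro cInf_greatest) auto

lemma dP_le:
  fixes Y :: "'b::metric_space set"
  assumes "l \<in> couplings Y \<nu>1 \<nu>2"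
  shows "dP Y \<nu>1 \<nu>2 \<le> integral\<^sup>L l (\<lambda>p. dist (fst p) (snd p))"
  unfolding dP_def
  by (rule cInf_lower) (use assms in \<open>auto intro!: bdd_belowI[where m=0]\<close>)


lemma dP_push_bound:
  fixes X :: "'a::metric_space set" and Y :: "'b::metric_space set" and f :: "'a \<Rightarrow> 'b"
  assumes cX: "compact X" and cY: "compact Y" and fXY: "f ` X \<subseteq> Y" and cf: "continuous_on X f"
    and mu: "\<mu> \<in> PM X" and eta: "\<eta> \<in> PM X" and k: "k \<ge> 0"
    and bnd: "\<forall>x\<in>X. \<forall>y\<in>X. dist (f x) (f y) \<le> k * dist x y + b"
  shows "dP Y (Pmap Y f \<mu>) (Pmap Y f \<eta>) \<le> k * dP X \<mu> \<eta> + b"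
proof -
  let ?BX = "restrict_space borel X" and ?BY = "restrict_space borel Y"
  let ?BXX = "restrict_space borel (X \<times> X)" and ?BYY = "restrict_space borel (Y \<times> Y)"
  define g where "g = (\<lambda>p. (f (fst p), f (snd p)))"
  have cg: "continuous_on (X \<times> X) g" unfolding g_def
    by (intro continuous_on_Pair continuous_on_compose2[OF cf]) (auto intro: continuous_intros)
  have gXY: "g ` (X \<times> X) \<subseteq> Y \<times> Y" using fXY unfolding g_def by auto
  obtain BX where BX: "\<forall>x\<in>X. \<forall>y\<in>X. dist x y \<le> BX" using compact_dist_bound[OF cX] by blast
  obtain BY where BY: "\<forall>x\<in>Y. \<forall>y\<in>Y. dist x y \<le> BY" using compact_dist_bound[OF cY] by blast
  have cd: "continuous_on A (\<lambda>p::'c::metric_space \<times> 'c. dist (fst p) (snd p))" for A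
    by (intro continuous_intros)
  have mupm: "sets \<mu> = sets ?BX" using mu by (auto simp: PM_def)
  have etapm: "sets \<eta> = sets ?BX" using eta by (auto simp: PM_def)
  have fm: "f \<in> measurable ?BX ?BY" by (rule meas_cont[OF refl cf fXY])
  have claim: "dP Y (Pmap Y f \<mu>) (Pmap Y f \<eta>) \<le> k * integral\<^sup>L l (\<lambda>p. dist (fst p) (snd p)) + b"
    if l: "l \<in> couplings X \<mu> \<eta>" for l
  proof -
    have lp: "prob_space l" and ls: "sets l = sets ?BXX"
      and l1: "distr l ?BX fst = \<mu>" and l2: "distr l ?BX snd = \<eta>"
      using l by (auto simp: couplings_def)
    interpret prob_space l by fact
    have sp: "space l = X \<times> X" using sets_eq_imp_space_eq[OF ls] by (simp add: space_restrict_space)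
    have gm: "g \<in> measurable l ?BYY" by (rule meas_cont[OF ls cg gXY])
    have fstm: "fst \<in> measurable l ?BX" by (rule meas_cont[OF ls]) (auto intro: continuous_intros)
    have sndm: "snd \<in> measurable l ?BX" by (rule meas_cont[OF ls]) (auto intro: continuous_intros)
    have fstY: "fst \<in> measurable ?BYY ?BY" by (rule meas_cont[OF refl]) (auto intro: continuous_intros)
    have sndY: "snd \<in> measurable ?BYY ?BY" by (rule meas_cont[OF refl]) (auto intro: continuous_intros)
    define l' where "l' = distr l ?BYY g"
    have "distr l' ?BY fst = distr l ?BY (fst \<circ> g)" unfolding l'_def by (rule distr_distr[OF fstY gm])
    also have "\<dots> = distr l ?BY (f \<circ> fst)" by (simp add: g_def comp_def)
    also have "\<dots> = distr (distr l ?BX fst) ?BY f" by (rule distr_distr[OF fm fstm, symmetric])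
    finally have e1: "distr l' ?BY fst = Pmap Y f \<mu>" using l1 by (simp add: Pmap_def)
    have "distr l' ?BY snd = distr l ?BY (snd \<circ> g)" unfolding l'_def by (rule distr_distr[OF sndY gm])
    also have "\<dots> = distr l ?BY (f \<circ> snd)" by (simp add: g_def comp_def)
    also have "\<dots> = distr (distr l ?BX snd) ?BY f" by (rule distr_distr[OF fm sndm, symmetric])
    finally have e2: "distr l' ?BY snd = Pmap Y f \<eta>" using l2 by (simp add: Pmap_def)
    have l'c: "l' \<in> couplings Y (Pmap Y f \<mu>) (Pmap Y f \<eta>)"
      unfolding couplings_def using e1 e2 prob_space_distr[OF gm] by (auto simp: l'_def)
    have "integral\<^sup>L l' (\<lambda>p. dist (fst p) (snd p)) = integral\<^sup>L l (\<lambda>p. dist (fst (g p)) (snd (g p)))"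
      unfolding l'_def by (rule integral_distr[OF gm meas_cont_borel[OF refl cd]])
    also have "\<dots> \<le> integral\<^sup>L l (\<lambda>p. k * dist (fst p) (snd p) + b)"
    proof (rule integral_mono)
      show "integrable l (\<lambda>p. dist (fst (g p)) (snd (g p)))"
      proof (rule integrable_cont_bdd[OF lp ls, where B=BY])
        show "continuous_on (X \<times> X) (\<lambda>p. dist (fst (g p)) (snd (g p)))"
          by (intro continuous_on_dist continuous_on_compose2[OF _ cg gXY]) (auto intro: continuous_intros)
        show "\<forall>p\<in>X \<times> X. \<bar>dist (fst (g p)) (snd (g p))\<bar> \<le> BY" using BY fXY by (auto simp: g_def)
      qed
      show "integrable l (\<lambda>p. k * dist (fst p) (snd p) + b)"
      proof (rule integrable_cont_bdd[OF lp ls, where B="\<bar>k\<bar> * BX + \<bar>b\<bar>"])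
        show "continuous_on (X \<times> X) (\<lambda>p. k * dist (fst p) (snd p) + b)"
          by (intro continuous_intros)
        show "\<forall>p\<in>X \<times> X. \<bar>k * dist (fst p) (snd p) + b\<bar> \<le> \<bar>k\<bar> * BX + \<bar>b\<bar>"
        proof
          fix p assume "p \<in> X \<times> X"
          then have "dist (fst p) (snd p) \<le> BX" using BX by auto
          then have "\<bar>k * dist (fst p) (snd p)\<bar> \<le> \<bar>k\<bar> * BX"
            by (simp add: abs_mult mult_left_mono)
          then show "\<bar>k * dist (fst p) (snd p) + b\<bar> \<le> \<bar>k\<bar> * BX + \<bar>b\<bar>" by linarith
        qed
      qed
      show "dist (fst (g p)) (snd (g p)) \<le> k * dist (fst p) (snd p) + b" if "p \<in> space l" for p
        using that sp bnd by (auto simp: g_def)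
    qed
    also have "\<dots> = k * integral\<^sup>L l (\<lambda>p. dist (fst p) (snd p)) + b"
    proof -
      have int: "integrable l (\<lambda>p. dist (fst p) (snd p))"
        by (rule integrable_cont_bdd[OF lp ls cd, where B=BX]) (use BX in auto)
      have "integral\<^sup>L l (\<lambda>p. k * dist (fst p) (snd p) + b) = integral\<^sup>L l (\<lambda>p. k * dist (fst p) (snd p)) + integral\<^sup>L l (\<lambda>p. b)"
        using Bochner_Integration.integral_add[of l "\<lambda>p. k * dist (fst p) (snd p)" "\<lambda>p. b"] int by simp
      then show ?thesis by (simp add: prob_space)
    qed
    finally show ?thesis using dP_le[OF l'c] by linarith
  qed
  have ne: "couplings X \<mu> \<eta> \<noteq> {}" using coupling_exists[OF cX mu eta] by blast
  show ?thesis
  proof (cases "k = 0")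
    case True
    then obtain l where "l \<in> couplings X \<mu> \<eta>" using ne by blast
    from claim[OF this] True show ?thesis by simp
  next
    case False
    with k have kp: "k > 0" by simp
    have "(dP Y (Pmap Y f \<mu>) (Pmap Y f \<eta>) - b) / k \<le> dP X \<mu> \<eta>"
      unfolding dP_def[of X]
    proof (rule cInf_greatest)
      show "(\<lambda>l. integral\<^sup>L l (\<lambda>p. dist (fst p) (snd p))) ` couplings X \<mu> \<eta> \<noteq> {}" using ne by simp
      fix m assume "m \<in> (\<lambda>l. integral\<^sup>L l (\<lambda>p. dist (fst p) (snd p))) ` couplings X \<mu> \<eta>"
      then obtain l where l: "l \<in> couplings X \<mu> \<eta>" and m: "m = integral\<^sup>L l (\<lambda>p. dist (fst p) (snd p))" by blast
      show "(dP Y (Pmap Y f \<mu>) (Pmap Y f \<eta>) - b) / k \<le> m"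
        using claim[OF l] kp m by (simp add: divide_le_eq mult.commute)
    qed
    then show ?thesis using kp by (simp add: divide_le_eq mult.commute)
  qed
qed


theorem lemma2p1:
  fixes X :: "'a::metric_space set" and Y :: "'b::metric_space set" and f :: "'a \<Rightarrow> 'b"
  assumes "compact X" and "compact Y"
    and "rakotch_contracting X dist Y dist f"
  shows "rakotch_contracting (PM X) (dP X) (PM Y) (dP Y) (Pmap Y f)"
proof -
  note cX = assms(1) and cY = assms(2)
  from assms(3) obtain \<phi> :: "real \<Rightarrow> real" where fXY: "f ` X \<subseteq> Y"
    and phi0: "\<forall>t\<ge>0. \<phi> t \<ge> 0"
    and phid: "\<forall>x\<in>X. \<forall>x'\<in>X. dist (f x) (f x') \<le> \<phi> (dist x x')"
    and phic: "\<forall>a>0. \<exists>c<1. \<forall>t>a. \<phi> t / t \<le> c"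
    unfolding rakotch_contracting_def by blast
  have lt: "dist (f x) (f y) \<le> dist x y" if "x \<in> X" "y \<in> X" for x y
  proof (cases "x = y")
    case False
    then have t: "dist x y > 0" by simp
    then obtain c where c: "c < 1" "\<forall>t > dist x y / 2. \<phi> t / t \<le> c" using phic
      by (metis half_gt_zero)
    then have "\<phi> (dist x y) / dist x y \<le> c" using t by auto
    then have "\<phi> (dist x y) \<le> c * dist x y" using t by (simp add: divide_le_eq)
    also have "\<dots> \<le> dist x y" using c t by simp
    finally show ?thesis using phid that by (meson order_trans)
  qed simp
  have cf: "continuous_on X f"
    unfolding continuous_on_iff
    by (metis lt le_less_trans)
  define K where "K s = Sup ((\<lambda>t. \<phi> t / t) ` {t. s / 2 < t})" for s
  have Kprops: "0 \<le> K s \<and> K s \<le> c \<and> (\<forall>t>s/2. \<phi> t / t \<le> K s)"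
    if s: "s > 0" and c: "\<forall>t > s/2. \<phi> t / t \<le> c" for s c
  proof -
    have "s \<in> {t. s / 2 < t}" using s by auto
    then have ne: "(\<lambda>t. \<phi> t / t) ` {t. s / 2 < t} \<noteq> {}" by blast
    have bdd: "bdd_above ((\<lambda>t. \<phi> t / t) ` {t. s / 2 < t})" using c by (auto intro!: bdd_aboveI)
    have up: "\<forall>t>s/2. \<phi> t / t \<le> K s" unfolding K_def
    proof (intro allI impI)
      fix t assume "t > s / 2"
      then show "\<phi> t / t \<le> Sup ((\<lambda>t. \<phi> t / t) ` {t. s / 2 < t})"
        by (intro cSup_upper[OF _ bdd]) auto
    qed
    have "\<phi> s / s \<le> K s" using up s by auto
    moreover have "0 \<le> \<phi> s / s" using phi0 s by auto
    moreover have "K s \<le> c" unfolding K_def using ne c by (auto intro!: cSup_least)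
    ultimately show ?thesis using up by (meson order_trans)
  qed
  have Kex: "\<exists>c<1. 0 \<le> K s \<and> K s \<le> c \<and> (\<forall>t>s/2. \<phi> t / t \<le> K s)" if s: "s > 0" for s
  proof -
    obtain c where c: "c < 1" "\<forall>t > s/2. \<phi> t / t \<le> c" using phic s by (metis half_gt_zero)
    show ?thesis using Kprops[OF s c(2)] c(1) by blast
  qed
  define \<Phi> where "\<Phi> s = (if s \<le> 0 then 0 else s * (1 + K s) / 2)" for s
  have PM_map: "Pmap Y f ` PM X \<subseteq> PM Y"
  proof
    fix \<nu> assume "\<nu> \<in> Pmap Y f ` PM X"
    then obtain \<mu> where mu: "\<mu> \<in> PM X" and nu: "\<nu> = Pmap Y f \<mu>" by blast
    have "sets \<mu> = sets (restrict_space borel X)" "prob_space \<mu>" using mu by (auto simp: PM_def)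
    then have "f \<in> measurable \<mu> (restrict_space borel Y)" "prob_space \<mu>"
      using meas_cont[OF _ cf fXY] by auto
    then show "\<nu> \<in> PM Y" using nu prob_space.prob_space_distr by (auto simp: PM_def Pmap_def)
  qed
  have main: "dP Y (Pmap Y f \<mu>) (Pmap Y f \<eta>) \<le> \<Phi> (dP X \<mu> \<eta>)"
    if mu: "\<mu> \<in> PM X" and eta: "\<eta> \<in> PM X" for \<mu> \<eta>
  proof -
    define s where "s = dP X \<mu> \<eta>"
    have s0: "s \<ge> 0" unfolding s_def by (rule dP_nonneg[OF cX mu eta])
    show ?thesis
    proof (cases "s = 0")
      case True
      have "dP Y (Pmap Y f \<mu>) (Pmap Y f \<eta>) \<le> 1 * dP X \<mu> \<eta> + 0"
        by (rule dP_push_bound[OF cX cY fXY cf mu eta]) (use lt in auto)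
      then show ?thesis using True by (simp add: s_def \<Phi>_def)
    next
      case False
      with s0 have sp: "s > 0" by simp
      obtain c where c: "c < 1" and K: "0 \<le> K s" "K s \<le> c" "\<forall>t>s/2. \<phi> t / t \<le> K s"
        using Kex[OF sp] by blast
      have "dP Y (Pmap Y f \<mu>) (Pmap Y f \<eta>) \<le> K s * dP X \<mu> \<eta> + (1 - K s) * s / 2"
      proof (rule dP_push_bound[OF cX cY fXY cf mu eta K(1)], intro ballI)
        fix x y assume x: "x \<in> X" and y: "y \<in> X"
        show "dist (f x) (f y) \<le> K s * dist x y + (1 - K s) * s / 2"
        proof (cases "dist x y \<le> s / 2")
          case True
          have "dist (f x) (f y) \<le> dist x y" by (rule lt[OF x y])
          also have "\<dots> = K s * dist x y + (1 - K s) * dist x y" by algebra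
          also have "\<dots> \<le> K s * dist x y + (1 - K s) * (s / 2)"
            using True K c by (intro add_left_mono mult_left_mono) auto
          finally show ?thesis by simp
        next
          case False
          then have dp: "dist x y > 0" using sp by linarith
          have "\<phi> (dist x y) / dist x y \<le> K s" using K(3) False by auto
          then have "\<phi> (dist x y) \<le> K s * dist x y" using dp by (simp add: divide_le_eq)
          moreover have "0 \<le> (1 - K s) * s / 2" using K c sp by auto
          ultimately show ?thesis using phid x y by fastforce
        qed
      qed
      also have "\<dots> = \<Phi> s" using sp by (simp add: \<Phi>_def s_def[symmetric] field_simps)
      finally show ?thesis by (simp add: s_def)
    qed
  qed
  show ?thesis
    unfolding rakotch_contracting_def
  proof (intro conjI exI[of _ \<Phi>])
    show "Pmap Y f ` PM X \<subseteq> PM Y" by (rule PM_map)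
    show "\<forall>t\<ge>0. 0 \<le> \<Phi> t"
    proof (intro allI impI)
      fix t :: real assume "t \<ge> 0"
      show "0 \<le> \<Phi> t"
      proof (cases "t > 0")
        case True
        then obtain c where "0 \<le> K t" using Kex by blast
        then show ?thesis using True by (simp add: \<Phi>_def)
      qed (simp add: \<Phi>_def)
    qed
    show "\<forall>x\<in>PM X. \<forall>x'\<in>PM X. dP Y (Pmap Y f x) (Pmap Y f x') \<le> \<Phi> (dP X x x')"
      using main by blast
    show "\<forall>a>0. \<exists>c<1. \<forall>t>a. \<Phi> t / t \<le> c"
    proof (intro allI impI)
      fix a :: real assume a: "a > 0"
      obtain c0 where c0: "c0 < 1" "\<forall>t > a/2. \<phi> t / t \<le> c0" using phic a by (metis half_gt_zero)
      show "\<exists>c<1. \<forall>t>a. \<Phi> t / t \<le> c"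
      proof (intro exI[of _ "(1 + c0) / 2"] conjI allI impI)
        show "(1 + c0) / 2 < 1" using c0 by simp
        fix t assume t: "t > a"
        have "\<forall>u > t/2. \<phi> u / u \<le> c0" using c0 t by auto
        from Kprops[OF _ this] t a have "K t \<le> c0" by auto
        moreover have "\<Phi> t / t = (1 + K t) / 2" using t a by (simp add: \<Phi>_def)
        ultimately show "\<Phi> t / t \<le> (1 + c0) / 2" by simp
      qed
    qed
  qed
qed

end
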